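(* For every infinite cardinal $\lambda$, there is no Hausdorff $d$-feebly compact topological semigroup $S$ containing a dense subsemigroup isomorphic to the semigroup of $\lambda\times\lambda$-matrix units $B_\lambda$.
   Context: For a non-zero cardinal $\lambda$, $B_\lambda=(\lambda\times\lambda)\cup\{0\}$ with multiplication $(a,b)\cdot(c,d)=(a,d)$ if $b=c$, $(a,b)\cdot(c,d)=0$ if $b\neq c$, and $(a,b)\cdot0=0\cdot(a,b)=0\cdot0=0$. A topological semigroup is a topological space with a jointly continuous associative operation. A space is $d$-feebly compact if every discrete family of its open subsets is finite. *)

theory Defs
  imports "HOL-Analysis.Analysis"
begin

text \<open>The semigroup of L x L matrix units B_L: elements Some (a,b) for a,b in L, and None as zero.\<close>

definition B_carrier :: "'l set \<Rightarrow> ('l \<times> 'l) option set" where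
  "B_carrier L = insert None (Some ` (L \<times> L))"

fun B_mult :: "('l \<times> 'l) option \<Rightarrow> ('l \<times> 'l) option \<Rightarrow> ('l \<times> 'l) option" where
  "B_mult (Some (a, b)) (Some (c, d)) = (if b = c then Some (a, d) else None)"
| "B_mult _ _ = None"

definition topological_semigroup :: "'a topology \<Rightarrow> ('a \<Rightarrow> 'a \<Rightarrow> 'a) \<Rightarrow> bool" where
  "topological_semigroup X m \<longleftrightarrow>
     (\<forall>x\<in>topspace X. \<forall>y\<in>topspace X. m x y \<in> topspace X) \<and>
     (\<forall>x\<in>topspace X. \<forall>y\<in>topspace X. \<forall>z\<in>topspace X. m (m x y) z = m x (m y z)) \<and>
     continuous_map (prod_topology X X) X (\<lambda>(x, y). m x y)"

definition discrete_family :: "'a topology \<Rightarrow> 'a set set \<Rightarrow> bool" where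
  "discrete_family X \<U> \<longleftrightarrow>
     (\<forall>x\<in>topspace X. \<exists>V. openin X V \<and> x \<in> V \<and>
        (\<forall>U1\<in>\<U>. \<forall>U2\<in>\<U>. U1 \<inter> V \<noteq> {} \<and> U2 \<inter> V \<noteq> {} \<longrightarrow> U1 = U2))"

definition d_feebly_compact :: "'a topology \<Rightarrow> bool" where
  "d_feebly_compact X \<longleftrightarrow>
     (\<forall>\<U>. (\<forall>U\<in>\<U>. openin X U) \<and> discrete_family X \<U> \<longrightarrow> finite \<U>)"

end

theory Submission
  imports Defs
begin

locale BS =
  fixes L :: "'l set" and X :: "'a topology" and m :: "'a \<Rightarrow> 'a \<Rightarrow> 'a"
    and h :: "('l \<times> 'l) option \<Rightarrow> 'a"
  assumes infL: "infinite L"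
    and haus: "Hausdorff_space X"
    and ts: "topological_semigroup X m"
    and dfc: "d_feebly_compact X"
    and himg: "h ` B_carrier L \<subseteq> topspace X"
    and hinj: "inj_on h (B_carrier L)"
    and hom: "\<forall>x\<in>B_carrier L. \<forall>y\<in>B_carrier L. h (B_mult x y) = m (h x) (h y)"
    and dens: "X closure_of (h ` B_carrier L) = topspace X"
begin

definition e :: "'l \<Rightarrow> 'l \<Rightarrow> 'a" where "e a b = h (Some (a, b))"
definition z :: 'a where "z = h None"

lemma t1: "t1_space X" using haus by (rule Hausdorff_imp_t1_space)

lemma inB: "a \<in> L \<Longrightarrow> b \<in> L \<Longrightarrow> Some (a,b) \<in> B_carrier L"
  by (auto simp: B_carrier_def)
lemma NoneB: "None \<in> B_carrier L" by (simp add: B_carrier_def)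

lemma e_in: "a \<in> L \<Longrightarrow> b \<in> L \<Longrightarrow> e a b \<in> topspace X"
  using himg inB unfolding e_def by blast
lemma z_in: "z \<in> topspace X"
  using himg NoneB unfolding z_def by blast

lemma mult_e: "a \<in> L \<Longrightarrow> b \<in> L \<Longrightarrow> b' \<in> L \<Longrightarrow> d \<in> L \<Longrightarrow>
   m (e a b) (e b' d) = (if b = b' then e a d else z)"
proof -
  assume "a \<in> L" "b \<in> L" "b' \<in> L" "d \<in> L"
  then have "h (B_mult (Some (a,b)) (Some (b',d))) = m (h (Some (a,b))) (h (Some (b',d)))"
    using hom inB by blast
  then show ?thesis unfolding e_def z_def by (cases "b = b'") simp_all
qed

lemma e_ne_z: "a \<in> L \<Longrightarrow> b \<in> L \<Longrightarrow> e a b \<noteq> z"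
  using inj_onD[OF hinj _ inB[of a b] NoneB] unfolding e_def z_def by auto

lemma e_inj: "a \<in> L \<Longrightarrow> b \<in> L \<Longrightarrow> a' \<in> L \<Longrightarrow> b' \<in> L \<Longrightarrow> e a b = e a' b' \<Longrightarrow> a = a' \<and> b = b'"
  using inj_onD[OF hinj _ inB[of a b] inB[of a' b']] unfolding e_def by auto

lemma cont2:
  assumes "p \<in> topspace X" "q \<in> topspace X" "openin X M" "m p q \<in> M"
  shows "\<exists>V W. openin X V \<and> openin X W \<and> p \<in> V \<and> q \<in> W \<and> (\<forall>u\<in>V. \<forall>v\<in>W. m u v \<in> M)"
proof -
  have c: "continuous_map (prod_topology X X) X (\<lambda>(x, y). m x y)"
    using ts unfolding topological_semigroup_def by blast
  have o: "openin (prod_topology X X) {x \<in> topspace (prod_topology X X). (\<lambda>(x, y). m x y) x \<in> M}"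
    using openin_continuous_map_preimage[OF c assms(3)] .
  define S where "S = {x \<in> topspace (prod_topology X X). (\<lambda>(x, y). m x y) x \<in> M}"
  have oS: "openin (prod_topology X X) S" using o unfolding S_def .
  have pq: "(p, q) \<in> S"
    using assms unfolding S_def by simp
  have "\<exists>U V. openin X U \<and> openin X V \<and> p \<in> U \<and> q \<in> V \<and> U \<times> V \<subseteq> S"
    using oS pq unfolding openin_prod_topology_alt by simp
  then obtain V W where VW: "openin X V" "openin X W" "p \<in> V" "q \<in> W" "V \<times> W \<subseteq> S"
    by blast
  have "\<forall>u\<in>V. \<forall>v\<in>W. m u v \<in> M"
  proof (intro ballI)
    fix u v assume "u \<in> V" "v \<in> W"
    then have "(u, v) \<in> S" using VW(5) by blast
    then show "m u v \<in> M" unfolding S_def by simp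
  qed
  then show ?thesis using VW(1-4) by blast
qed

lemma dense_meet: "openin X U \<Longrightarrow> U \<noteq> {} \<Longrightarrow> \<exists>y\<in>B_carrier L. h y \<in> U"
proof -
  assume "openin X U" "U \<noteq> {}"
  then have "h ` B_carrier L \<inter> U \<noteq> {}" using dens unfolding dense_intersects_open by blast
  then show ?thesis by blast
qed

lemma mult_in: "p \<in> topspace X \<Longrightarrow> q \<in> topspace X \<Longrightarrow> m p q \<in> topspace X"
  using ts unfolding topological_semigroup_def by blast

lemma zB_left: "y \<in> B_carrier L \<Longrightarrow> m z (h y) = z"
proof -
  assume y: "y \<in> B_carrier L"
  have "h (B_mult None y) = m (h None) (h y)" using hom NoneB y by blast
  then show ?thesis unfolding z_def by simp
qed
lemma zB_right: "y \<in> B_carrier L \<Longrightarrow> m (h y) z = z"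
proof -
  assume y: "y \<in> B_carrier L"
  have "B_mult y None = None" by (cases y) auto
  moreover have "h (B_mult y None) = m (h y) (h None)" using hom NoneB y by blast
  ultimately show ?thesis unfolding z_def by simp
qed

lemma eq_by_nbhd:
  assumes "r \<in> topspace X" "\<And>M. openin X M \<Longrightarrow> r \<in> M \<Longrightarrow> z \<in> M"
  shows "r = z"
proof (rule ccontr)
  assume "r \<noteq> z"
  have H: "\<exists>U V. openin X U \<and> openin X V \<and> x \<in> U \<and> y \<in> V \<and> disjnt U V"
    if "x \<in> topspace X" "y \<in> topspace X" "x \<noteq> y" for x y
    using haus that unfolding Hausdorff_space_def by blast
  obtain M M' where "openin X M" "openin X M'" "r \<in> M" "z \<in> M'" "disjnt M M'"
    using H[OF assms(1) z_in \<open>r \<noteq> z\<close>] by blast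
  then have "z \<in> M" using assms(2) by blast
  then show False using \<open>z \<in> M'\<close> \<open>disjnt M M'\<close> by (simp add: disjnt_iff)
qed

lemma zero_left: "s \<in> topspace X \<Longrightarrow> m z s = z"
proof (rule eq_by_nbhd)
  assume s: "s \<in> topspace X"
  show "m z s \<in> topspace X" by (rule mult_in[OF z_in s])
  fix M assume "openin X M" "m z s \<in> M"
  then obtain V W where VW: "openin X V" "openin X W" "z \<in> V" "s \<in> W" "\<forall>u\<in>V. \<forall>v\<in>W. m u v \<in> M"
    using cont2[OF z_in s \<open>openin X M\<close> \<open>m z s \<in> M\<close>] by blast
  have "W \<noteq> {}" using VW(4) by blast
  then obtain y where "y \<in> B_carrier L" "h y \<in> W" using dense_meet[OF VW(2)] by blast
  then have "m z (h y) \<in> M" using VW(3,5) by blast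
  then show "z \<in> M" using zB_left[OF \<open>y \<in> B_carrier L\<close>] by simp
qed

lemma zero_right: "s \<in> topspace X \<Longrightarrow> m s z = z"
proof (rule eq_by_nbhd)
  assume s: "s \<in> topspace X"
  show "m s z \<in> topspace X" by (rule mult_in[OF s z_in])
  fix M assume "openin X M" "m s z \<in> M"
  then obtain V W where VW: "openin X V" "openin X W" "s \<in> V" "z \<in> W" "\<forall>u\<in>V. \<forall>v\<in>W. m u v \<in> M"
    using cont2[OF s z_in \<open>openin X M\<close> \<open>m s z \<in> M\<close>] by blast
  have "V \<noteq> {}" using VW(3) by blast
  then obtain y where "y \<in> B_carrier L" "h y \<in> V" using dense_meet[OF VW(1)] by blast
  then have "m (h y) z \<in> M" using VW(4,5) by blast
  then show "z \<in> M" using zB_right[OF \<open>y \<in> B_carrier L\<close>] by simp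
qed


lemma two_el: "infinite S \<Longrightarrow> \<exists>x\<in>S. \<exists>y\<in>S. x \<noteq> y"
proof -
  assume "infinite S"
  then obtain x where x: "x \<in> S" using infinite_imp_nonempty by blast
  have "infinite (S - {x})" using \<open>infinite S\<close> by simp
  then obtain y where "y \<in> S - {x}" using infinite_imp_nonempty by blast
  then show ?thesis using x by blast
qed

lemma cont_left: "k \<in> topspace X \<Longrightarrow> continuous_map X X (\<lambda>t. m k t)"
proof -
  assume k: "k \<in> topspace X"
  have c: "continuous_map (prod_topology X X) X (\<lambda>(x, y). m x y)"
    using ts unfolding topological_semigroup_def by blast
  have "continuous_map X (prod_topology X X) (\<lambda>t. (k, t))"
    using k by (intro continuous_map_pairedI) simp_all
  from continuous_map_compose[OF this c] show ?thesis by (simp add: o_def)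
qed

lemma cont_right: "k \<in> topspace X \<Longrightarrow> continuous_map X X (\<lambda>t. m t k)"
proof -
  assume k: "k \<in> topspace X"
  have c: "continuous_map (prod_topology X X) X (\<lambda>(x, y). m x y)"
    using ts unfolding topological_semigroup_def by blast
  have "continuous_map X (prod_topology X X) (\<lambda>t. (t, k))"
    using k by (intro continuous_map_pairedI) simp_all
  from continuous_map_compose[OF this c] show ?thesis by (simp add: o_def)
qed

lemma iso:
  assumes a: "a \<in> L" and b: "b \<in> L"
  shows "openin X {e a b}"
proof -
  define f where "f = (\<lambda>t. m (m (e a a) t) (e b b))"
  have cf: "continuous_map X X f"
    unfolding f_def
    using continuous_map_compose[OF cont_left[OF e_in[OF a a]] cont_right[OF e_in[OF b b]]]
    by (simp add: o_def)
  have ozc: "openin X (topspace X - {z})"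
    using closedin_t1_singleton[OF t1 z_in] by (simp add: openin_diff)
  define Ob where "Ob = {t \<in> topspace X. f t \<in> topspace X - {z}}"
  have oO: "openin X Ob" unfolding Ob_def using openin_continuous_map_preimage[OF cf ozc] .
  have fe: "f (e a b) = e a b" unfolding f_def using a b by (simp add: mult_e)
  have eO: "e a b \<in> Ob" unfolding Ob_def using fe e_in[OF a b] e_ne_z[OF a b] by simp
  have "Ob \<subseteq> {e a b}"
  proof
    fix t assume tO: "t \<in> Ob"
    show "t \<in> {e a b}"
    proof (rule ccontr)
      assume "t \<notin> {e a b}"
      have "openin X (Ob - {e a b})"
        using openin_diff[OF oO closedin_t1_singleton[OF t1 e_in[OF a b]]] .
      moreover have "Ob - {e a b} \<noteq> {}" using tO \<open>t \<notin> {e a b}\<close> by blast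
      ultimately obtain y where y: "y \<in> B_carrier L" "h y \<in> Ob - {e a b}"
        using dense_meet by blast
      show False
      proof (cases y)
        case None
        have "f (h y) = z" unfolding f_def None z_def[symmetric]
          using zB_right[OF inB[OF a a]] zB_left[OF inB[OF b b]] NoneB
          unfolding e_def by simp
        then show False using y unfolding Ob_def by simp
      next
        case (Some pq)
        then obtain p q where pq: "y = Some (p, q)" by (cases pq) auto
        have p: "p \<in> L" and q: "q \<in> L" using y(1) pq by (auto simp: B_carrier_def)
        have hy: "h y = e p q" using pq e_def by simp
        have "f (h y) = z \<or> (p = a \<and> q = b)"
          unfolding f_def hy using a b p q
          by (auto simp: mult_e zB_left[OF inB[OF b b], folded e_def])
        then show False using y hy unfolding Ob_def by auto
      qed
    qed
  qed
  then have "Ob = {e a b}" using eO by blast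
  then show ?thesis using oO by simp
qed

lemma accum:
  assumes P: "P \<subseteq> topspace X" "\<forall>p\<in>P. openin X {p}" "infinite P"
  shows "\<exists>q\<in>topspace X. \<forall>V. openin X V \<and> q \<in> V \<longrightarrow> infinite (V \<inter> P)"
proof -
  define U where "U = (\<lambda>p. {p}) ` P"
  have injU: "inj_on (\<lambda>p. {p}) P" by (rule inj_onI) simp
  have iU: "infinite U" unfolding U_def using P(3) finite_image_iff[OF injU] by simp
  have oU: "\<forall>A\<in>U. openin X A" unfolding U_def using P(2) by auto
  have "\<not> discrete_family X U"
  proof
    assume "discrete_family X U"
    then have "finite U" using dfc oU unfolding d_feebly_compact_def by blast
    then show False using iU by contradiction
  qed
  then obtain q where q: "q \<in> topspace X"
    "\<not> (\<exists>V. openin X V \<and> q \<in> V \<and>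
        (\<forall>U1\<in>U. \<forall>U2\<in>U. U1 \<inter> V \<noteq> {} \<and> U2 \<inter> V \<noteq> {} \<longrightarrow> U1 = U2))"
    unfolding discrete_family_def by blast
  have q2: "\<exists>U1\<in>U. \<exists>U2\<in>U. U1 \<inter> V \<noteq> {} \<and> U2 \<inter> V \<noteq> {} \<and> U1 \<noteq> U2"
    if "openin X V" "q \<in> V" for V
    using q(2) that by blast
  have two: "\<exists>p1\<in>P. \<exists>p2\<in>P. p1 \<in> V \<and> p2 \<in> V \<and> p1 \<noteq> p2" if VV: "openin X V" "q \<in> V" for V
  proof -
    obtain U1 U2 where "U1 \<in> U" "U2 \<in> U" "U1 \<inter> V \<noteq> {}" "U2 \<inter> V \<noteq> {}" "U1 \<noteq> U2"
      using q2[OF VV] by blast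
    then show ?thesis unfolding U_def by blast
  qed
  have qP: "q \<notin> P"
  proof
    assume "q \<in> P"
    then have "openin X {q}" using P(2) by blast
    then obtain p1 p2 where "p1 \<in> {q}" "p2 \<in> {q}" "p1 \<noteq> p2" using two[of "{q}"] by blast
    then show False by blast
  qed
  show ?thesis
  proof (intro bexI[OF _ q(1)] allI impI)
    fix V assume V: "openin X V \<and> q \<in> V"
    show "infinite (V \<inter> P)"
    proof
      assume fin: "finite (V \<inter> P)"
      have "closedin X (V \<inter> P)" using fin P(1) t1 unfolding t1_space_closedin_finite by blast
      then have "openin X (V - (V \<inter> P))" using V by (simp add: openin_diff)
      moreover have "q \<in> V - (V \<inter> P)" using V qP by blast
      ultimately obtain p1 where "p1 \<in> P" "p1 \<in> V - (V \<inter> P)" using two by meson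
      then show False by blast
    qed
  qed
qed

lemma L1:
  assumes N0: "openin X N0" "z \<in> N0"
  shows "finite {a \<in> L. e a a \<notin> N0}"
proof (rule ccontr)
  define E where "E = {a \<in> L. e a a \<notin> N0}"
  assume "infinite {a \<in> L. e a a \<notin> N0}"
  then have iE: "infinite E" unfolding E_def .
  define P where "P = (\<lambda>a. e a a) ` E"
  have injE: "inj_on (\<lambda>a. e a a) E"
  proof (rule inj_onI)
    fix a b assume "a \<in> E" "b \<in> E" "e a a = e b b"
    then show "a = b" using e_inj[of a a b b] unfolding E_def by auto
  qed
  have iP: "infinite P" unfolding P_def using iE finite_image_iff[OF injE] by simp
  have PX: "P \<subseteq> topspace X" unfolding P_def E_def using e_in by auto
  have Po: "\<forall>p\<in>P. openin X {p}" unfolding P_def E_def using iso by auto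
  obtain q where q: "q \<in> topspace X" "\<And>V. openin X V \<Longrightarrow> q \<in> V \<Longrightarrow> infinite (V \<inter> P)"
    using accum[OF PX Po iP] by blast
  have r: "m q q = z"
  proof (rule eq_by_nbhd)
    show "m q q \<in> topspace X" using mult_in q(1) by blast
    fix M assume "openin X M" "m q q \<in> M"
    then obtain V W where VW: "openin X V" "openin X W" "q \<in> V" "q \<in> W" "\<forall>u\<in>V. \<forall>v\<in>W. m u v \<in> M"
      using cont2[OF q(1) q(1) \<open>openin X M\<close> \<open>m q q \<in> M\<close>] by blast
    then have "infinite ((V \<inter> W) \<inter> P)" using q(2)[OF openin_Int[OF VW(1,2)]] VW(3,4) by blast
    then obtain x y where xy: "x \<in> (V \<inter> W) \<inter> P" "y \<in> (V \<inter> W) \<inter> P" "x \<noteq> y" using two_el by blast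
    then obtain a b where ab: "a \<in> E" "b \<in> E" "x = e a a" "y = e b b" unfolding P_def by blast
    then have "a \<noteq> b" using xy by blast
    moreover have "a \<in> L" "b \<in> L" using ab unfolding E_def by auto
    ultimately have "m x y = z" using ab by (simp add: mult_e)
    moreover have "m x y \<in> M" using VW(5) xy(1,2) by blast
    ultimately show "z \<in> M" by simp
  qed
  obtain V W where VW: "openin X V" "openin X W" "q \<in> V" "q \<in> W" "\<forall>u\<in>V. \<forall>v\<in>W. m u v \<in> N0"
    using cont2[OF q(1) q(1) N0(1)] r N0(2) by (metis (no_types, lifting))
  then have "infinite ((V \<inter> W) \<inter> P)" using q(2)[OF openin_Int[OF VW(1,2)]] VW(3,4) by blast
  then obtain x where x: "x \<in> (V \<inter> W) \<inter> P" using infinite_imp_nonempty by blast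
  then obtain a where a: "a \<in> E" "x = e a a" unfolding P_def by blast
  then have aL: "a \<in> L" unfolding E_def by auto
  have "m x x = x" using a aL by (simp add: mult_e)
  moreover have "m x x \<in> N0" using VW(5) x by blast
  ultimately have "x \<in> N0" by simp
  then show False using a unfolding E_def by simp
qed

lemma main: False
proof -
  obtain c where c: "c \<in> L" using infL using infinite_imp_nonempty by blast
  define N where "N = topspace X - {e c c}"
  have oN: "openin X N" unfolding N_def
    using closedin_t1_singleton[OF t1 e_in[OF c c]] by (simp add: openin_diff)
  have zN: "z \<in> N" unfolding N_def using z_in e_ne_z[OF c c] by auto
  obtain U1 U2 where U: "openin X U1" "openin X U2" "z \<in> U1" "z \<in> U2" "\<forall>u\<in>U1. \<forall>v\<in>U2. m u v \<in> N"
    using cont2[OF z_in z_in oN] zero_left[OF z_in] zN by (metis (no_types, lifting))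
  define Px where "Px = (\<lambda>a. e a c) ` L"
  have injx: "inj_on (\<lambda>a. e a c) L"
  proof (rule inj_onI)
    fix a b assume "a \<in> L" "b \<in> L" "e a c = e b c"
    then show "a = b" using e_inj[of a c b c] c by auto
  qed
  have iPx: "infinite Px" unfolding Px_def using infL finite_image_iff[OF injx] by simp
  have PxX: "Px \<subseteq> topspace X" unfolding Px_def using e_in c by auto
  have Pxo: "\<forall>p\<in>Px. openin X {p}" unfolding Px_def using iso c by auto
  obtain s where s: "s \<in> topspace X" "\<And>V. openin X V \<Longrightarrow> s \<in> V \<Longrightarrow> infinite (V \<inter> Px)"
    using accum[OF PxX Pxo iPx] by blast
  obtain V1 W where VW: "openin X V1" "openin X W" "z \<in> V1" "s \<in> W" "\<forall>u\<in>V1. \<forall>v\<in>W. m u v \<in> U2"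
    using cont2[OF z_in s(1) U(2)] zero_left[OF s(1)] U(4) by (metis (no_types, lifting))
  have E0: "finite {a \<in> L. e a a \<notin> V1}" using L1 VW(1,3) by blast
  define Ax where "Ax = {a \<in> L. e a c \<in> U2}"
  have "W \<inter> Px \<subseteq> (\<lambda>a. e a c) ` {a \<in> L. e a c \<in> W}" unfolding Px_def by blast
  then have "infinite {a \<in> L. e a c \<in> W}" using s(2)[OF VW(2,4)] finite_subset by blast
  then have inf1: "infinite ({a \<in> L. e a c \<in> W} - {a \<in> L. e a a \<notin> V1})" using E0 by simp
  have sub1: "{a \<in> L. e a c \<in> W} - {a \<in> L. e a a \<notin> V1} \<subseteq> Ax"
  proof
    fix a assume a: "a \<in> {a \<in> L. e a c \<in> W} - {a \<in> L. e a a \<notin> V1}"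
    then have aL: "a \<in> L" and "e a a \<in> V1" "e a c \<in> W" by auto
    then have "m (e a a) (e a c) \<in> U2" using VW(5) by blast
    then show "a \<in> Ax" unfolding Ax_def using aL c by (simp add: mult_e)
  qed
  have iAx: "infinite Ax" using inf1 sub1 finite_subset by blast
  define Py where "Py = (\<lambda>a. e c a) ` Ax"
  have injy: "inj_on (\<lambda>a. e c a) Ax"
  proof (rule inj_onI)
    fix a b assume "a \<in> Ax" "b \<in> Ax" "e c a = e c b"
    then show "a = b" using e_inj[of c a c b] c unfolding Ax_def by auto
  qed
  have iPy: "infinite Py" unfolding Py_def using iAx finite_image_iff[OF injy] by simp
  have PyX: "Py \<subseteq> topspace X" unfolding Py_def Ax_def using e_in c by auto
  have Pyo: "\<forall>p\<in>Py. openin X {p}" unfolding Py_def Ax_def using iso c by auto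
  obtain t where t: "t \<in> topspace X" "\<And>V. openin X V \<Longrightarrow> t \<in> V \<Longrightarrow> infinite (V \<inter> Py)"
    using accum[OF PyX Pyo iPy] by blast
  obtain V V2 where VV: "openin X V" "openin X V2" "t \<in> V" "z \<in> V2" "\<forall>u\<in>V. \<forall>v\<in>V2. m u v \<in> U1"
    using cont2[OF t(1) z_in U(1)] zero_right[OF t(1)] U(3) by (metis (no_types, lifting))
  have E2: "finite {a \<in> L. e a a \<notin> V2}" using L1 VV(2,4) by blast
  have "V \<inter> Py \<subseteq> (\<lambda>a. e c a) ` {a \<in> Ax. e c a \<in> V}" unfolding Py_def by blast
  then have "infinite {a \<in> Ax. e c a \<in> V}" using t(2)[OF VV(1,3)] finite_subset by blast
  then have "infinite ({a \<in> Ax. e c a \<in> V} - {a \<in> L. e a a \<notin> V2})" using E2 by simp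
  then obtain a where a: "a \<in> {a \<in> Ax. e c a \<in> V} - {a \<in> L. e a a \<notin> V2}"
    using infinite_imp_nonempty by blast
  then have aL: "a \<in> L" and aA: "a \<in> Ax" and "e c a \<in> V" "e a a \<in> V2" unfolding Ax_def by auto
  then have "m (e c a) (e a a) \<in> U1" using VV(5) by blast
  then have y1: "e c a \<in> U1" using aL c by (simp add: mult_e)
  have x2: "e a c \<in> U2" using aA unfolding Ax_def by simp
  have "m (e c a) (e a c) \<in> N" using U(5) y1 x2 by blast
  then show False unfolding N_def using aL c by (simp add: mult_e)
qed

end

theorem corollary12:
  fixes L :: "'l set" and X :: "'a topology" and m :: "'a \<Rightarrow> 'a \<Rightarrow> 'a"
  assumes "infinite L"
    and "Hausdorff_space X"
    and "topological_semigroup X m"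
    and "d_feebly_compact X"
  shows "\<not> (\<exists>h. h ` B_carrier L \<subseteq> topspace X \<and> inj_on h (B_carrier L) \<and>
               (\<forall>x\<in>B_carrier L. \<forall>y\<in>B_carrier L. h (B_mult x y) = m (h x) (h y)) \<and>
               X closure_of (h ` B_carrier L) = topspace X)"
proof
  assume "\<exists>h. h ` B_carrier L \<subseteq> topspace X \<and> inj_on h (B_carrier L) \<and>
               (\<forall>x\<in>B_carrier L. \<forall>y\<in>B_carrier L. h (B_mult x y) = m (h x) (h y)) \<and>
               X closure_of (h ` B_carrier L) = topspace X"
  then obtain h where h: "h ` B_carrier L \<subseteq> topspace X" "inj_on h (B_carrier L)"
    "\<forall>x\<in>B_carrier L. \<forall>y\<in>B_carrier L. h (B_mult x y) = m (h x) (h y)"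
    "X closure_of (h ` B_carrier L) = topspace X" by blast
  interpret BS L X m h using assms h by unfold_locales
  show False by (rule main)
qed

end
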